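(* Let $P\mapsto\nu_P(\cdot\mid x)$ be a rule assigning to each observed-data law $P$ of $O=(X,A,W,Y)$ a conditional distribution on $W$ given $X=x$, and suppose the rule is outcome-free: whenever $P_{XAW}=P'_{XAW}$ (equal marginal laws of $(X,A,W)$), $\nu_P(\cdot\mid x)=\nu_{P'}(\cdot\mid x)$ for $P_X$-almost every $x$. Define $\Psi_\nu(P):=\mathbb{E}_P\!\left[\int\Delta(w,X)\,\mathrm{d}\nu_P(w\mid X)\right]$. If $\Psi_\nu(P)=\theta_{\mathrm{ATE}}$ for every confounder-model law $P$ satisfying positivity and the confounder-model assumptions, then for every observed-data law $P$ satisfying positivity, $\nu_P(\cdot\mid X)=F_{W\mid X}(\cdot\mid X)$ $P$-almost surely, and consequently $\Psi_\nu(P)=\mathbb{E}_P\{\Delta(W,X)\}=\psi(P)$. Hence $\psi(P)$ is the unique functional of the form $P\mapsto\mathbb{E}_P[\int\Delta(w,X)\,\mathrm{d}\nu_P(w\mid X)]$ with $\nu_P$ outcome-free that coincides with the average treatment effect under the confounder model.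
   Context: $A\in\{0,1\}$; $Q(a,w,x)=\mathbb{E}_P(Y\mid A=a,W=w,X=x)$, $\Delta(w,x)=Q(1,w,x)-Q(0,w,x)$, $\psi(P)=\mathbb{E}_P\{\Delta(W,X)\}$; $F_{W\mid X}$ is the conditional law of $W$ given $X$ under $P$. Positivity: $0<\mathbb{P}(A=1\mid X=x,W=w)<1$ for $P$-a.e. $(x,w)$. Confounder-model assumptions ($W$ pre-exposure, potential outcomes $Y^{(0)},Y^{(1)}$): if $A=a$ then $Y=Y^{(a)}$ a.s.; $Y^{(a)}\perp\!\!\!\perp A\mid(X,W)$ for $a\in\{0,1\}$; $\theta_{\mathrm{ATE}}=\mathbb{E}\{Y^{(1)}-Y^{(0)}\}$. *)

theory Defs
  imports "HOL-Probability.Probability"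
begin

text \<open>Observed data O = (X, A, W, Y) with A :: bool (True = 1, False = 0).
  Full data (X, A, W, Y, Y0, Y1) adds the potential outcomes.\<close>

type_synonym ('x,'w) obs = "'x \<times> bool \<times> 'w \<times> real"
type_synonym ('x,'w) full = "'x \<times> bool \<times> 'w \<times> real \<times> real \<times> real"

definition obsM :: "('x::topological_space, 'w::topological_space) obs measure" where
  "obsM = borel \<Otimes>\<^sub>M (count_space UNIV \<Otimes>\<^sub>M (borel \<Otimes>\<^sub>M borel))"

definition XAWM :: "('x::topological_space \<times> bool \<times> 'w::topological_space) measure" where
  "XAWM = borel \<Otimes>\<^sub>M (count_space UNIV \<Otimes>\<^sub>M borel)"

definition fullM :: "('x::topological_space, 'w::topological_space) full measure" where
  "fullM = borel \<Otimes>\<^sub>M (count_space UNIV \<Otimes>\<^sub>M (borel \<Otimes>\<^sub>M (borel \<Otimes>\<^sub>M (borel \<Otimes>\<^sub>M borel))))"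

definition oX :: "('x,'w) obs \<Rightarrow> 'x" where "oX = (\<lambda>(x,a,w,y). x)"
definition oA :: "('x,'w) obs \<Rightarrow> bool" where "oA = (\<lambda>(x,a,w,y). a)"
definition oW :: "('x,'w) obs \<Rightarrow> 'w" where "oW = (\<lambda>(x,a,w,y). w)"
definition oY :: "('x,'w) obs \<Rightarrow> real" where "oY = (\<lambda>(x,a,w,y). y)"
definition oXAW :: "('x,'w) obs \<Rightarrow> 'x \<times> bool \<times> 'w" where "oXAW = (\<lambda>(x,a,w,y). (x,a,w))"

definition fX :: "('x,'w) full \<Rightarrow> 'x" where "fX = (\<lambda>(x,a,w,y,y0,y1). x)"
definition fA :: "('x,'w) full \<Rightarrow> bool" where "fA = (\<lambda>(x,a,w,y,y0,y1). a)"
definition fW :: "('x,'w) full \<Rightarrow> 'w" where "fW = (\<lambda>(x,a,w,y,y0,y1). w)"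
definition fY :: "('x,'w) full \<Rightarrow> real" where "fY = (\<lambda>(x,a,w,y,y0,y1). y)"
definition fY0 :: "('x,'w) full \<Rightarrow> real" where "fY0 = (\<lambda>(x,a,w,y,y0,y1). y0)"
definition fY1 :: "('x,'w) full \<Rightarrow> real" where "fY1 = (\<lambda>(x,a,w,y,y0,y1). y1)"
definition obs_of :: "('x,'w) full \<Rightarrow> ('x,'w) obs" where
  "obs_of = (\<lambda>(x,a,w,y,y0,y1). (x,a,w,y))"

definition cond_exp_version ::
  "'a measure \<Rightarrow> 'b measure \<Rightarrow> ('a \<Rightarrow> 'b) \<Rightarrow> ('a \<Rightarrow> real) \<Rightarrow> ('b \<Rightarrow> real) \<Rightarrow> bool" where
  "cond_exp_version M N g f h \<longleftrightarrow>
     h \<in> borel_measurable N \<and> integrable M (\<lambda>\<omega>. h (g \<omega>)) \<and>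
     (\<forall>S\<in>sets N. (\<integral>\<omega>. indicator S (g \<omega>) * f \<omega> \<partial>M) = (\<integral>\<omega>. indicator S (g \<omega>) * h (g \<omega>) \<partial>M))"

definition obs_law :: "('x::topological_space, 'w::topological_space) obs measure \<Rightarrow> bool" where
  "obs_law P \<longleftrightarrow> prob_space P \<and> sets P = sets obsM \<and> integrable P oY"

definition Q_version ::
  "('x::topological_space, 'w::topological_space) obs measure \<Rightarrow> (bool \<times> 'w \<times> 'x \<Rightarrow> real) \<Rightarrow> bool" where
  "Q_version P Q \<longleftrightarrow>
     cond_exp_version P (count_space UNIV \<Otimes>\<^sub>M (borel \<Otimes>\<^sub>M borel)) (\<lambda>\<omega>. (oA \<omega>, oW \<omega>, oX \<omega>)) oY Q"

definition Delta :: "(bool \<times> 'w \<times> 'x \<Rightarrow> real) \<Rightarrow> 'w \<Rightarrow> 'x \<Rightarrow> real" where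
  "Delta Q w x = Q (True, w, x) - Q (False, w, x)"

definition positivity :: "('x::topological_space, 'w::topological_space) obs measure \<Rightarrow> bool" where
  "positivity P \<longleftrightarrow> (\<exists>e. cond_exp_version P (borel \<Otimes>\<^sub>M borel) (\<lambda>\<omega>. (oX \<omega>, oW \<omega>))
        (\<lambda>\<omega>. if oA \<omega> then 1 else 0) e \<and>
      (AE \<omega> in P. 0 < e (oX \<omega>, oW \<omega>) \<and> e (oX \<omega>, oW \<omega>) < 1))"

definition psi :: "('x, 'w) obs measure \<Rightarrow> (bool \<times> 'w \<times> 'x \<Rightarrow> real) \<Rightarrow> real" where
  "psi P Q = (\<integral>\<omega>. Delta Q (oW \<omega>) (oX \<omega>) \<partial>P)"

definition Psi :: "(('x, 'w) obs measure \<Rightarrow> 'x \<Rightarrow> 'w measure) \<Rightarrow> ('x, 'w) obs measure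
                    \<Rightarrow> (bool \<times> 'w \<times> 'x \<Rightarrow> real) \<Rightarrow> real" where
  "Psi \<nu> P Q = (\<integral>\<omega>. (\<integral>w. Delta Q w (oX \<omega>) \<partial>(\<nu> P (oX \<omega>))) \<partial>P)"

definition cond_law_version ::
  "('x::topological_space, 'w::topological_space) obs measure \<Rightarrow> ('x \<Rightarrow> 'w measure) \<Rightarrow> bool" where
  "cond_law_version P K \<longleftrightarrow> K \<in> borel \<rightarrow>\<^sub>M prob_algebra borel \<and>
     (\<forall>B\<in>sets (borel :: 'x measure). \<forall>C\<in>sets (borel :: 'w measure).
        measure P {\<omega>\<in>space P. oX \<omega> \<in> B \<and> oW \<omega> \<in> C}
          = (\<integral>\<omega>. indicator B (oX \<omega>) * measure (K (oX \<omega>)) C \<partial>P))"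

definition outcome_free ::
  "(('x::topological_space, 'w::topological_space) obs measure \<Rightarrow> 'x \<Rightarrow> 'w measure) \<Rightarrow> bool" where
  "outcome_free \<nu> \<longleftrightarrow> (\<forall>P P'. obs_law P \<longrightarrow> obs_law P' \<longrightarrow>
       distr P XAWM oXAW = distr P' XAWM oXAW \<longrightarrow>
       (AE x in distr P borel oX. \<nu> P x = \<nu> P' x))"

definition full_law :: "('x::topological_space, 'w::topological_space) full measure \<Rightarrow> bool" where
  "full_law Pf \<longleftrightarrow> prob_space Pf \<and> sets Pf = sets fullM \<and>
     integrable Pf fY \<and> integrable Pf fY0 \<and> integrable Pf fY1"

definition consistency :: "('x, 'w) full measure \<Rightarrow> bool" where
  "consistency Pf \<longleftrightarrow> (AE \<omega> in Pf. (fA \<omega> \<longrightarrow> fY \<omega> = fY1 \<omega>) \<and> (\<not> fA \<omega> \<longrightarrow> fY \<omega> = fY0 \<omega>))"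

text \<open>Ya independent of A given (X,W) (A binary, so the event {A} generates sigma(A)).\<close>
definition cond_indep_A ::
  "('x::topological_space, 'w::topological_space) full measure \<Rightarrow> (('x,'w) full \<Rightarrow> real) \<Rightarrow> bool" where
  "cond_indep_A Pf Ya \<longleftrightarrow> (\<forall>B\<in>sets (borel :: real measure). \<exists>h1 h2 h12.
      cond_exp_version Pf (borel \<Otimes>\<^sub>M borel) (\<lambda>\<omega>. (fX \<omega>, fW \<omega>)) (\<lambda>\<omega>. indicator B (Ya \<omega>)) h1 \<and>
      cond_exp_version Pf (borel \<Otimes>\<^sub>M borel) (\<lambda>\<omega>. (fX \<omega>, fW \<omega>)) (\<lambda>\<omega>. if fA \<omega> then 1 else 0) h2 \<and>
      cond_exp_version Pf (borel \<Otimes>\<^sub>M borel) (\<lambda>\<omega>. (fX \<omega>, fW \<omega>))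
          (\<lambda>\<omega>. indicator B (Ya \<omega>) * (if fA \<omega> then 1 else 0)) h12 \<and>
      (AE \<omega> in Pf. h12 (fX \<omega>, fW \<omega>) = h1 (fX \<omega>, fW \<omega>) * h2 (fX \<omega>, fW \<omega>)))"

definition confounder_model :: "('x::topological_space, 'w::topological_space) full measure \<Rightarrow> bool" where
  "confounder_model Pf \<longleftrightarrow> full_law Pf \<and> consistency Pf \<and> cond_indep_A Pf fY0 \<and> cond_indep_A Pf fY1"

definition obs_law_of :: "('x::topological_space, 'w::topological_space) full measure \<Rightarrow> ('x,'w) obs measure" where
  "obs_law_of Pf = distr Pf obsM obs_of"

definition ATE :: "('x, 'w) full measure \<Rightarrow> real" where
  "ATE Pf = (\<integral>\<omega>. fY1 \<omega> - fY0 \<omega> \<partial>Pf)"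

end

theory Submission
  imports Defs
begin


lemma oX_eq: "oX = fst" and oA_eq: "oA = fst \<circ> snd" and oW_eq: "oW = fst \<circ> snd \<circ> snd"
  and oY_eq: "oY = snd \<circ> snd \<circ> snd"
  by (auto simp: oX_def oA_def oW_def oY_def)

lemma fX_eq: "fX = fst" and fA_eq: "fA = fst \<circ> snd" and fW_eq: "fW = fst \<circ> snd \<circ> snd"
  and fY_eq: "fY = fst \<circ> snd \<circ> snd \<circ> snd" and fY0_eq: "fY0 = fst \<circ> snd \<circ> snd \<circ> snd \<circ> snd"
  and fY1_eq: "fY1 = snd \<circ> snd \<circ> snd \<circ> snd \<circ> snd"
  by (auto simp: fX_def fA_def fW_def fY_def fY0_def fY1_def)

lemma meas_o:
  assumes "sets M = sets obsM"
  shows "oX \<in> measurable M borel" "oA \<in> measurable M (count_space UNIV)"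
    "oW \<in> measurable M borel" "oY \<in> measurable M borel"
  using assms unfolding oX_eq oA_eq oW_eq oY_eq
  by (simp_all add: measurable_cong_sets[OF assms refl] obsM_def)

lemmas meas_oo[measurable] = meas_o[OF refl]

lemma meas_f[measurable]:
  shows "fX \<in> measurable fullM borel" "fA \<in> measurable fullM (count_space UNIV)"
    "fW \<in> measurable fullM borel" "fY \<in> measurable fullM borel"
    "fY0 \<in> measurable fullM borel" "fY1 \<in> measurable fullM borel"
  unfolding fX_eq fA_eq fW_eq fY_eq fY0_eq fY1_eq fullM_def
  by simp_all

lemma meas_obs_of[measurable]: "obs_of \<in> measurable fullM obsM"
proof -
  have e: "obs_of = (\<lambda>\<omega>. (fX \<omega>, fA \<omega>, fW \<omega>, fY \<omega>))"
    by (auto simp: obs_of_def fX_def fA_def fW_def fY_def)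
  show ?thesis unfolding e obsM_def by measurable
qed

lemma meas_oXAW[measurable]: "oXAW \<in> measurable obsM XAWM"
proof -
  have e: "oXAW = (\<lambda>\<omega>. (oX \<omega>, oA \<omega>, oW \<omega>))"
    by (auto simp: oXAW_def oX_def oA_def oW_def)
  show ?thesis unfolding e XAWM_def by measurable
qed


lemma integral_measurable_subprob_algebra2:
  fixes f :: "_ \<Rightarrow> _ \<Rightarrow> real"
  assumes f: "(\<lambda>(x, y). f x y) \<in> borel_measurable (M \<Otimes>\<^sub>M N)"
  assumes N: "L \<in> measurable M (subprob_algebra N)"
  shows "(\<lambda>x. integral\<^sup>L (L x) (f x)) \<in> borel_measurable M"
proof -
  have D: "(\<lambda>x. distr (L x) (M \<Otimes>\<^sub>M N) (\<lambda>y. (x, y))) \<in> measurable M (subprob_algebra (M \<Otimes>\<^sub>M N))"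
  proof -
    have "case_prod (\<lambda>x y. (x, y)) \<in> measurable (M \<Otimes>\<^sub>M N) (M \<Otimes>\<^sub>M N)"
      by (simp only: case_prod_Pair measurable_ident)
    from measurable_distr2[where f="\<lambda>x y. (x, y)" and g=L and L=M and M=N and N="M \<Otimes>\<^sub>M N", OF this N]
    show ?thesis .
  qed
  have I: "(\<lambda>Q. integral\<^sup>L Q (\<lambda>(x, y). f x y)) \<in> subprob_algebra (M \<Otimes>\<^sub>M N) \<rightarrow>\<^sub>M borel"
    by (rule integral_measurable_subprob_algebra[OF f])
  have C: "(\<lambda>x. integral\<^sup>L (distr (L x) (M \<Otimes>\<^sub>M N) (\<lambda>y. (x, y))) (\<lambda>(x, y). f x y)) \<in> borel_measurable M"
    using measurable_comp[OF D I] by (simp only: comp_def)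
  have E: "integral\<^sup>L (distr (L x) (M \<Otimes>\<^sub>M N) (\<lambda>y. (x, y))) (\<lambda>(x, y). f x y) = integral\<^sup>L (L x) (f x)"
    if x: "x \<in> space M" for x
  proof -
    have L: "sets (L x) = sets N" using measurable_space[OF N x] by (simp add: space_subprob_algebra)
    have m0: "(\<lambda>y. (x, y)) \<in> measurable N (M \<Otimes>\<^sub>M N)"
      using x by (rule measurable_Pair1')
    have m: "(\<lambda>y. (x, y)) \<in> measurable (L x) (M \<Otimes>\<^sub>M N)"
      using m0 by (subst measurable_cong_sets[OF L refl])
    show ?thesis
      by (simp only: integral_distr[OF m f] case_prod_conv)
  qed
  show ?thesis using C by (rule measurable_cong[THEN iffD1, rotated]) (rule E)
qed
lemma cev_distr:
  assumes T[measurable]: "T \<in> measurable P M" and G[measurable]: "G \<in> measurable M N"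
    and f[measurable]: "f \<in> borel_measurable M"
    and c: "cond_exp_version P N (\<lambda>\<omega>. G (T \<omega>)) (\<lambda>\<omega>. f (T \<omega>)) h"
  shows "cond_exp_version (distr P M T) N G f h"
proof -
  from c have h[measurable]: "h \<in> borel_measurable N" and i: "integrable P (\<lambda>\<omega>. h (G (T \<omega>)))"
    and eq: "\<And>S. S \<in> sets N \<Longrightarrow> (\<integral>\<omega>. indicator S (G (T \<omega>)) * f (T \<omega>) \<partial>P) = (\<integral>\<omega>. indicator S (G (T \<omega>)) * h (G (T \<omega>)) \<partial>P)"
    unfolding cond_exp_version_def by auto
  have hG: "(\<lambda>\<omega>. h (G \<omega>)) \<in> borel_measurable M" by measurable
  have "integrable (distr P M T) (\<lambda>\<omega>. h (G \<omega>))" using i by (simp only: integrable_distr_eq[OF T hG])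
  moreover have "(\<integral>\<omega>. indicator S (G \<omega>) * f \<omega> \<partial>distr P M T) = (\<integral>\<omega>. indicator S (G \<omega>) * h (G \<omega>) \<partial>distr P M T)"
    if S: "S \<in> sets N" for S
  proof -
    note S[measurable]
    have m1: "(\<lambda>\<omega>. indicator S (G \<omega>) * f \<omega> :: real) \<in> borel_measurable M" by measurable
    have m2: "(\<lambda>\<omega>. indicator S (G \<omega>) * h (G \<omega>) :: real) \<in> borel_measurable M" by measurable
    show ?thesis using eq[OF S] by (simp only: integral_distr[OF T m1] integral_distr[OF T m2])
  qed
  ultimately show ?thesis unfolding cond_exp_version_def using h by blast
qed

lemma cev_self:
  assumes "h \<in> borel_measurable N" "integrable P (\<lambda>\<omega>. h (G \<omega>))" "\<And>\<omega>. f \<omega> = h (G \<omega>)"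
  shows "cond_exp_version P N G f h"
  using assms unfolding cond_exp_version_def by simp

lemma cev_cmult:
  assumes "cond_exp_version P N G f h"
  shows "cond_exp_version P N G (\<lambda>\<omega>. c * f \<omega>) (\<lambda>y. c * h y)"
proof -
  have a: "(\<integral>\<omega>. indicator S (G \<omega>) * (c * F \<omega>) \<partial>P) = c * (\<integral>\<omega>. indicator S (G \<omega>) * F \<omega> \<partial>P)" for S F
  proof -
    have "(\<integral>\<omega>. indicator S (G \<omega>) * (c * F \<omega>) \<partial>P) = (\<integral>\<omega>. c * (indicator S (G \<omega>) * F \<omega>) \<partial>P)"
      by (rule Bochner_Integration.integral_cong) (simp_all add: algebra_simps)
    then show ?thesis by (simp only: integral_mult_right_zero)
  qed
  have b: "(\<integral>\<omega>. indicator S (G \<omega>) * (c * h (G \<omega>)) \<partial>P) = c * (\<integral>\<omega>. indicator S (G \<omega>) * h (G \<omega>) \<partial>P)" for S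
    using a[of S "\<lambda>\<omega>. h (G \<omega>)"] .
  show ?thesis using assms unfolding cond_exp_version_def a b
    by (auto intro: borel_measurable_times integrable_mult_right)
qed

lemma cev_ind:
  assumes c: "cond_exp_version P N G f h" and K: "K \<in> sets N" and G: "G \<in> measurable P N"
  shows "cond_exp_version P N G (\<lambda>\<omega>. indicator K (G \<omega>) * f \<omega>) (\<lambda>y. indicator K y * h y)"
proof -
  from c have h: "h \<in> borel_measurable N" and i: "integrable P (\<lambda>\<omega>. h (G \<omega>))"
    and eq: "\<And>S. S \<in> sets N \<Longrightarrow> (\<integral>\<omega>. indicator S (G \<omega>) * f \<omega> \<partial>P) = (\<integral>\<omega>. indicator S (G \<omega>) * h (G \<omega>) \<partial>P)"
    unfolding cond_exp_version_def by auto
  have hm: "(\<lambda>y. indicator K y * h y) \<in> borel_measurable N"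
    using h K by (intro borel_measurable_times borel_measurable_indicator)
  have "(\<lambda>\<omega>. indicator K (G \<omega>) * h (G \<omega>)) \<in> borel_measurable P"
    using measurable_comp[OF G hm] by (simp only: comp_def)
  then have "integrable P (\<lambda>\<omega>. indicator K (G \<omega>) * h (G \<omega>))"
    by (rule Bochner_Integration.integrable_bound[OF i]) (simp add: indicator_def)
  moreover have "(\<integral>\<omega>. indicator S (G \<omega>) * (indicator K (G \<omega>) * f \<omega>) \<partial>P) =
      (\<integral>\<omega>. indicator S (G \<omega>) * (indicator K (G \<omega>) * h (G \<omega>)) \<partial>P)" if S: "S \<in> sets N" for S
  proof -
    have "S \<inter> K \<in> sets N" using S K by (rule sets.Int)
    from eq[OF this] show ?thesis by (simp only: indicator_inter_arith mult.assoc)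
  qed
  ultimately show ?thesis unfolding cond_exp_version_def using hm by blast
qed



lemma key:
  fixes \<nu> :: "('x::topological_space, 'w::topological_space) obs measure \<Rightarrow> 'x \<Rightarrow> 'w measure"
    and P :: "('x, 'w) obs measure" and g :: "'w \<Rightarrow> 'x \<Rightarrow> real"
  assumes kernel: "\<forall>P'. obs_law P' \<longrightarrow> \<nu> P' \<in> borel \<rightarrow>\<^sub>M prob_algebra borel"
    and outcome_free: "outcome_free \<nu>"
    and ate: "\<forall>Pf. confounder_model Pf \<and> positivity (obs_law_of Pf) \<longrightarrow>
                (\<forall>Q. Q_version (obs_law_of Pf) Q \<longrightarrow> Psi \<nu> (obs_law_of Pf) Q = ATE Pf)"
    and obs: "obs_law P"
    and pos: "positivity P"
    and gm: "(\<lambda>(w,x). g w x) \<in> borel_measurable (borel \<Otimes>\<^sub>M borel)"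
    and gi: "integrable P (\<lambda>\<omega>. g (oW \<omega>) (oX \<omega>))"
  shows "(\<integral>\<omega>. (\<integral>w. g w (oX \<omega>) \<partial>(\<nu> P (oX \<omega>))) \<partial>P) = (\<integral>\<omega>. g (oW \<omega>) (oX \<omega>) \<partial>P)"
proof -
  have sP: "sets P = sets obsM" and psP: "prob_space P" and iY: "integrable P oY"
    using obs by (auto simp: obs_law_def)
  have mX[measurable]: "oX \<in> measurable P borel" and mA[measurable]: "oA \<in> measurable P (count_space UNIV)"
    and mW[measurable]: "oW \<in> measurable P borel"
    using meas_o[OF sP] by auto
  note gm[measurable]
  have gx[measurable]: "(\<lambda>(x,w). g w x) \<in> borel_measurable (borel \<Otimes>\<^sub>M borel)" by measurable
  have g2[measurable]: "(\<lambda>\<omega>. g (oW \<omega>) (oX \<omega>)) \<in> borel_measurable P" by measurable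
  from pos obtain e where ce: "cond_exp_version P (borel \<Otimes>\<^sub>M borel) (\<lambda>\<omega>. (oX \<omega>, oW \<omega>)) (\<lambda>\<omega>. if oA \<omega> then 1 else 0) e"
     and eAE: "AE \<omega> in P. 0 < e (oX \<omega>, oW \<omega>) \<and> e (oX \<omega>, oW \<omega>) < 1"
    unfolding positivity_def by blast
  have em[measurable]: "e \<in> borel_measurable (borel \<Otimes>\<^sub>M borel)" using ce by (simp add: cond_exp_version_def)
  define T where "T = (\<lambda>\<omega>::('x,'w) obs. (oX \<omega>, oA \<omega>, oW \<omega>, if oA \<omega> then g (oW \<omega>) (oX \<omega>) else 0, 0::real, g (oW \<omega>) (oX \<omega>)))"
  define T' where "T' = (\<lambda>\<omega>::('x,'w) obs. (oX \<omega>, oA \<omega>, oW \<omega>, if oA \<omega> then g (oW \<omega>) (oX \<omega>) else 0))"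
  have Tm[measurable]: "T \<in> measurable P fullM" unfolding T_def fullM_def by measurable
  have T'm[measurable]: "T' \<in> measurable P obsM" unfolding T'_def obsM_def by measurable
  have Ts: "fX (T \<omega>) = oX \<omega>" "fA (T \<omega>) = oA \<omega>" "fW (T \<omega>) = oW \<omega>"
    "fY (T \<omega>) = (if oA \<omega> then g (oW \<omega>) (oX \<omega>) else 0)" "fY0 (T \<omega>) = 0" "fY1 (T \<omega>) = g (oW \<omega>) (oX \<omega>)"
    for \<omega> by (simp_all add: T_def fX_def fA_def fW_def fY_def fY0_def fY1_def)
  have T's: "oX (T' \<omega>) = oX \<omega>" "oA (T' \<omega>) = oA \<omega>" "oW (T' \<omega>) = oW \<omega>"
    "oY (T' \<omega>) = (if oA \<omega> then g (oW \<omega>) (oX \<omega>) else 0)" "oXAW (T' \<omega>) = oXAW \<omega>"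
    for \<omega> by (cases \<omega>; simp add: T'_def oX_def oA_def oW_def oY_def oXAW_def)+
  define Pf where "Pf = distr P fullM T"
  define P' where "P' = distr P obsM T'"
  have oT: "obs_of \<circ> T = T'" by (rule ext) (simp add: T_def T'_def obs_of_def)
  have P'eq: "obs_law_of Pf = P'"
    unfolding obs_law_of_def Pf_def P'_def by (simp add: distr_distr[OF meas_obs_of Tm] oT)
  have gAm: "(\<lambda>\<omega>. if oA \<omega> then g (oW \<omega>) (oX \<omega>) else 0) \<in> borel_measurable P" by measurable
  have gA: "integrable P (\<lambda>\<omega>. if oA \<omega> then g (oW \<omega>) (oX \<omega>) else 0)"
    by (rule Bochner_Integration.integrable_bound[OF gi gAm]) auto

  have lift: "cond_exp_version Pf N G f h"
    if "cond_exp_version P N (\<lambda>\<omega>. G (T \<omega>)) (\<lambda>\<omega>. f (T \<omega>)) h" "G \<in> measurable fullM N" "f \<in> borel_measurable fullM"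
    for N :: "'z measure" and G f h
    unfolding Pf_def by (rule cev_distr[OF Tm that(2,3,1)])
  have lift': "cond_exp_version P' N G f h"
    if "cond_exp_version P N (\<lambda>\<omega>. G (T' \<omega>)) (\<lambda>\<omega>. f (T' \<omega>)) h" "G \<in> measurable obsM N" "f \<in> borel_measurable obsM"
    for N :: "'z measure" and G f h
    unfolding P'_def by (rule cev_distr[OF T'm that(2,3,1)])
  have psPf: "prob_space Pf" unfolding Pf_def by (rule prob_space.prob_space_distr[OF psP Tm])
  have psP': "prob_space P'" unfolding P'_def by (rule prob_space.prob_space_distr[OF psP T'm])
  have full: "full_law Pf"
    unfolding full_law_def
  proof (intro conjI psPf)
    show "sets Pf = sets fullM" by (simp add: Pf_def)
    show "integrable Pf fY" unfolding Pf_def integrable_distr_eq[OF Tm meas_f(4)] Ts using gA .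
    show "integrable Pf fY0" unfolding Pf_def integrable_distr_eq[OF Tm meas_f(5)] Ts by simp
    show "integrable Pf fY1" unfolding Pf_def integrable_distr_eq[OF Tm meas_f(6)] Ts using gi .
  qed
  have cons: "consistency Pf"
  proof -
    have "{x \<in> space fullM. (fA x \<longrightarrow> fY x = fY1 x) \<and> (\<not> fA x \<longrightarrow> fY x = fY0 x)} \<in> sets fullM"
      by measurable
    then show ?thesis unfolding consistency_def Pf_def
      by (subst AE_distr_iff[OF Tm]) (auto simp: Ts)
  qed
  have GfW: "(\<lambda>\<omega>. (fX \<omega>, fW \<omega>)) \<in> measurable fullM (borel \<Otimes>\<^sub>M borel)" by measurable
  have GoW: "(\<lambda>\<omega>. (oX \<omega>, oW \<omega>)) \<in> measurable P (borel \<Otimes>\<^sub>M borel)" by measurable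
  have intc: "integrable P (\<lambda>\<omega>. c)" for c :: real
    using psP by (simp add: prob_space.finite_measure finite_measure.integrable_const)
  have ci0: "cond_indep_A Pf fY0"
    unfolding cond_indep_A_def
  proof
    fix B :: "real set" assume B[measurable]: "B \<in> sets borel"
    have h1: "cond_exp_version Pf (borel \<Otimes>\<^sub>M borel) (\<lambda>\<omega>. (fX \<omega>, fW \<omega>)) (\<lambda>\<omega>. indicator B (fY0 \<omega>)) (\<lambda>_. indicator B (0::real))"
      by (rule lift) (auto simp: Ts intro!: cev_self intc)
    have h2: "cond_exp_version Pf (borel \<Otimes>\<^sub>M borel) (\<lambda>\<omega>. (fX \<omega>, fW \<omega>)) (\<lambda>\<omega>. if fA \<omega> then 1 else 0) e"
      by (rule lift) (simp_all add: Ts ce)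
    have h12: "cond_exp_version Pf (borel \<Otimes>\<^sub>M borel) (\<lambda>\<omega>. (fX \<omega>, fW \<omega>))
        (\<lambda>\<omega>. indicator B (fY0 \<omega>) * (if fA \<omega> then 1 else 0)) (\<lambda>y. indicator B (0::real) * e y)"
      by (rule lift) (simp_all only: Ts cev_cmult[OF ce] GfW, measurable)
    show "\<exists>h1 h2 h12. cond_exp_version Pf (borel \<Otimes>\<^sub>M borel) (\<lambda>\<omega>. (fX \<omega>, fW \<omega>)) (\<lambda>\<omega>. indicator B (fY0 \<omega>)) h1 \<and>
      cond_exp_version Pf (borel \<Otimes>\<^sub>M borel) (\<lambda>\<omega>. (fX \<omega>, fW \<omega>)) (\<lambda>\<omega>. if fA \<omega> then 1 else 0) h2 \<and>
      cond_exp_version Pf (borel \<Otimes>\<^sub>M borel) (\<lambda>\<omega>. (fX \<omega>, fW \<omega>))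
          (\<lambda>\<omega>. indicator B (fY0 \<omega>) * (if fA \<omega> then 1 else 0)) h12 \<and>
      (AE \<omega> in Pf. h12 (fX \<omega>, fW \<omega>) = h1 (fX \<omega>, fW \<omega>) * h2 (fX \<omega>, fW \<omega>))"
      apply (rule exI[where x="\<lambda>_. indicator B (0::real)"], rule exI[where x=e], rule exI[where x="\<lambda>y. indicator B (0::real) * e y"])
      using h1 h2 h12 by simp
  qed

  have ci1: "cond_indep_A Pf fY1"
    unfolding cond_indep_A_def
  proof
    fix B :: "real set" assume B[measurable]: "B \<in> sets borel"
    define K where "K = (\<lambda>(x,w). g w x) -` B \<inter> space (borel \<Otimes>\<^sub>M borel :: ('x \<times> 'w) measure)"
    have K: "K \<in> sets (borel \<Otimes>\<^sub>M borel)" unfolding K_def by (rule measurable_sets[OF gx B])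
    have indK: "indicator K (x, w) = (indicator B (g w x) :: real)" for x w
      by (simp add: K_def indicator_def space_pair_measure)
    have Km: "indicator K \<in> borel_measurable (borel \<Otimes>\<^sub>M borel :: ('x \<times> 'w) measure)"
      using K by (rule borel_measurable_indicator)
    have iK: "integrable P (\<lambda>\<omega>. indicator K (oX \<omega>, oW \<omega>) :: real)"
    proof (rule Bochner_Integration.integrable_bound[OF intc[of 1]])
      show "(\<lambda>\<omega>. indicator K (oX \<omega>, oW \<omega>) :: real) \<in> borel_measurable P"
        using measurable_comp[OF GoW Km] by (simp add: comp_def)
    qed (simp add: indicator_def)
    have h1: "cond_exp_version Pf (borel \<Otimes>\<^sub>M borel) (\<lambda>\<omega>. (fX \<omega>, fW \<omega>)) (\<lambda>\<omega>. indicator B (fY1 \<omega>)) (indicator K)"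
      by (rule lift) (auto simp: Ts indK intro!: cev_self Km iK)
    have h2: "cond_exp_version Pf (borel \<Otimes>\<^sub>M borel) (\<lambda>\<omega>. (fX \<omega>, fW \<omega>)) (\<lambda>\<omega>. if fA \<omega> then 1 else 0) e"
      by (rule lift) (simp_all add: Ts ce)
    have c12: "cond_exp_version P (borel \<Otimes>\<^sub>M borel) (\<lambda>\<omega>. (oX \<omega>, oW \<omega>))
        (\<lambda>\<omega>. indicator B (g (oW \<omega>) (oX \<omega>)) * (if oA \<omega> then 1 else 0)) (\<lambda>y. indicator K y * e y)"
      using cev_ind[OF ce K GoW] by (simp only: indK)
    have h12: "cond_exp_version Pf (borel \<Otimes>\<^sub>M borel) (\<lambda>\<omega>. (fX \<omega>, fW \<omega>))
        (\<lambda>\<omega>. indicator B (fY1 \<omega>) * (if fA \<omega> then 1 else 0)) (\<lambda>y. indicator K y * e y)"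
      by (rule lift) (simp_all only: Ts c12 GfW, measurable)
    show "\<exists>h1 h2 h12. cond_exp_version Pf (borel \<Otimes>\<^sub>M borel) (\<lambda>\<omega>. (fX \<omega>, fW \<omega>)) (\<lambda>\<omega>. indicator B (fY1 \<omega>)) h1 \<and>
      cond_exp_version Pf (borel \<Otimes>\<^sub>M borel) (\<lambda>\<omega>. (fX \<omega>, fW \<omega>)) (\<lambda>\<omega>. if fA \<omega> then 1 else 0) h2 \<and>
      cond_exp_version Pf (borel \<Otimes>\<^sub>M borel) (\<lambda>\<omega>. (fX \<omega>, fW \<omega>))
          (\<lambda>\<omega>. indicator B (fY1 \<omega>) * (if fA \<omega> then 1 else 0)) h12 \<and>
      (AE \<omega> in Pf. h12 (fX \<omega>, fW \<omega>) = h1 (fX \<omega>, fW \<omega>) * h2 (fX \<omega>, fW \<omega>))"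
      apply (rule exI[where x="indicator K"], rule exI[where x=e], rule exI[where x="\<lambda>y. indicator K y * e y"])
      using h1 h2 h12 by simp
  qed
  have conf: "confounder_model Pf" unfolding confounder_model_def using full cons ci0 ci1 by blast
  have posP': "positivity P'"
    unfolding positivity_def
  proof (intro exI conjI)
    show "cond_exp_version P' (borel \<Otimes>\<^sub>M borel) (\<lambda>\<omega>. (oX \<omega>, oW \<omega>)) (\<lambda>\<omega>. if oA \<omega> then 1 else 0) e"
      by (rule lift') (simp_all add: T's ce)
    have "{\<omega> \<in> space obsM. 0 < e (oX \<omega>, oW \<omega>) \<and> e (oX \<omega>, oW \<omega>) < 1} \<in> sets obsM" by measurable
    then show "AE \<omega> in P'. 0 < e (oX \<omega>, oW \<omega>) \<and> e (oX \<omega>, oW \<omega>) < 1"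
      unfolding P'_def by (subst AE_distr_iff[OF T'm]) (simp_all only: T's eAE)
  qed
  define Qg where "Qg = (\<lambda>p::bool \<times> 'w \<times> 'x. if fst p then g (fst (snd p)) (snd (snd p)) else 0)"
  have Qg_simp: "Qg (a, w, x) = (if a then g w x else 0)" for a w x by (simp add: Qg_def)
  have Qgm: "Qg \<in> borel_measurable (count_space UNIV \<Otimes>\<^sub>M (borel \<Otimes>\<^sub>M borel))"
    unfolding Qg_def by measurable
  have QP': "Q_version P' Qg"
  proof -
    have gA': "integrable P (\<lambda>\<omega>. Qg (oA \<omega>, oW \<omega>, oX \<omega>))" using gA by (simp only: Qg_simp)
    show ?thesis
      unfolding Q_version_def
      apply (rule lift')
        apply (rule cev_self[OF Qgm])
      using gA' apply (simp add: T's)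
       apply (simp only: T's Qg_simp)
      apply measurable
      done
  qed
  have Psi_ate: "Psi \<nu> P' Qg = ATE Pf" 
  proof -
    have "Psi \<nu> (obs_law_of Pf) Qg = ATE Pf"
      using ate conf posP' QP' unfolding P'eq[symmetric] by blast
    then show ?thesis unfolding P'eq .
  qed
  have ATEeq: "ATE Pf = (\<integral>\<omega>. g (oW \<omega>) (oX \<omega>) \<partial>P)"
  proof -
    have "(\<lambda>\<omega>. fY1 \<omega> - fY0 \<omega>) \<in> borel_measurable fullM" by measurable
    then show ?thesis unfolding ATE_def Pf_def by (simp add: integral_distr[OF Tm] Ts)
  qed

  have obsP': "obs_law P'"
    unfolding obs_law_def
  proof (intro conjI psP')
    show "sets P' = sets obsM" by (simp add: P'_def)
    show "integrable P' oY" unfolding P'_def integrable_distr_eq[OF T'm meas_oo(4)] T's using gA .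
  qed
  have marg: "distr P XAWM oXAW = distr P' XAWM oXAW"
  proof -
    have "oXAW \<circ> T' = oXAW" by (rule ext) (simp add: T's)
    then show ?thesis unfolding P'_def by (simp add: distr_distr[OF meas_oXAW T'm])
  qed
  have "AE x in distr P borel oX. \<nu> P x = \<nu> P' x"
    using outcome_free obs obsP' marg unfolding outcome_free_def by blast
  then have AEnu: "AE \<omega> in P. \<nu> P (oX \<omega>) = \<nu> P' (oX \<omega>)" by (rule AE_distrD[OF mX])
  have kP: "\<nu> P \<in> borel \<rightarrow>\<^sub>M prob_algebra borel" using kernel obs by blast
  have kP': "\<nu> P' \<in> borel \<rightarrow>\<^sub>M prob_algebra borel" using kernel obsP' by blast
  have FP: "(\<lambda>x. \<integral>w. g w x \<partial>(\<nu> P x)) \<in> borel_measurable borel"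
    using integral_measurable_subprob_algebra2[where f="\<lambda>x w. g w x", OF gx measurable_prob_algebraD[OF kP]] .
  have FP': "(\<lambda>x. \<integral>w. g w x \<partial>(\<nu> P' x)) \<in> borel_measurable borel"
    using integral_measurable_subprob_algebra2[where f="\<lambda>x w. g w x", OF gx measurable_prob_algebraD[OF kP']] .
  have FPo: "(\<lambda>\<omega>. \<integral>w. g w (oX \<omega>) \<partial>(\<nu> P (oX \<omega>))) \<in> borel_measurable P"
    using measurable_comp[OF mX FP] by (simp add: comp_def)
  have FPo': "(\<lambda>\<omega>. \<integral>w. g w (oX \<omega>) \<partial>(\<nu> P' (oX \<omega>))) \<in> borel_measurable P"
    using measurable_comp[OF mX FP'] by (simp add: comp_def)
  have FPo'O: "(\<lambda>\<omega>. \<integral>w. g w (oX \<omega>) \<partial>(\<nu> P' (oX \<omega>))) \<in> borel_measurable obsM"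
    using measurable_comp[OF meas_oo(1) FP'] by (simp add: comp_def)
  have DQ: "Delta Qg w x = g w x" for w x by (simp add: Delta_def Qg_simp)
  have "Psi \<nu> P' Qg = (\<integral>\<omega>. (\<integral>w. g w (oX \<omega>) \<partial>(\<nu> P' (oX \<omega>))) \<partial>P')"
    unfolding Psi_def DQ ..
  also have "\<dots> = (\<integral>\<omega>. (\<integral>w. g w (oX \<omega>) \<partial>(\<nu> P' (oX \<omega>))) \<partial>P)"
    using integral_distr[OF T'm FPo'O] unfolding P'_def[symmetric] T's .
  also have "\<dots> = (\<integral>\<omega>. (\<integral>w. g w (oX \<omega>) \<partial>(\<nu> P (oX \<omega>))) \<partial>P)"
    by (rule integral_cong_AE[OF FPo' FPo]) (use AEnu in auto)
  finally show ?thesis using Psi_ate ATEeq by simp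
qed


theorem theorem4:
  fixes \<nu> :: "('x::topological_space, 'w::topological_space) obs measure \<Rightarrow> 'x \<Rightarrow> 'w measure"
    and P :: "('x, 'w) obs measure"
  assumes kernel: "\<forall>P'. obs_law P' \<longrightarrow> \<nu> P' \<in> borel \<rightarrow>\<^sub>M prob_algebra borel"
    and outcome_free: "outcome_free \<nu>"
    and ate: "\<forall>Pf. confounder_model Pf \<and> positivity (obs_law_of Pf) \<longrightarrow>
                (\<forall>Q. Q_version (obs_law_of Pf) Q \<longrightarrow> Psi \<nu> (obs_law_of Pf) Q = ATE Pf)"
    and obs: "obs_law P"
    and pos: "positivity P"
  shows "cond_law_version P (\<nu> P) \<and>
         (\<forall>Q. Q_version P Q \<and> integrable P (\<lambda>\<omega>. Delta Q (oW \<omega>) (oX \<omega>))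
                \<longrightarrow> Psi \<nu> P Q = psi P Q)"
proof (intro conjI allI impI)
  have sP: "sets P = sets obsM" and psP: "prob_space P"
    using obs by (auto simp: obs_law_def)
  have mX[measurable]: "oX \<in> measurable P borel" and mW[measurable]: "oW \<in> measurable P borel"
    using meas_o[OF sP] by auto
  have kP: "\<nu> P \<in> borel \<rightarrow>\<^sub>M prob_algebra borel" using kernel obs by blast
  have nuP: "sets (\<nu> P x) = sets borel" "prob_space (\<nu> P x)" for x
    using measurable_space[OF kP, of x] by (simp_all add: space_prob_algebra)
  show "cond_law_version P (\<nu> P)"
    unfolding cond_law_version_def
  proof (intro conjI kP ballI)
    fix B :: "'x set" and C :: "'w set"
    assume B[measurable]: "B \<in> sets borel" and C[measurable]: "C \<in> sets borel"
    define g where "g = (\<lambda>w x. indicator B x * indicator C w :: real)"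
    have gm: "(\<lambda>(w,x). g w x) \<in> borel_measurable (borel \<Otimes>\<^sub>M borel)" unfolding g_def by measurable
    have gPm: "(\<lambda>\<omega>. g (oW \<omega>) (oX \<omega>)) \<in> borel_measurable P" unfolding g_def by measurable
    have gi: "integrable P (\<lambda>\<omega>. g (oW \<omega>) (oX \<omega>))"
      by (rule Bochner_Integration.integrable_bound[OF _ gPm, where f="\<lambda>_. 1::real"])
        (use psP in \<open>simp_all add: prob_space.finite_measure finite_measure.integrable_const g_def indicator_def\<close>)
    note K = key[OF kernel outcome_free ate obs pos gm gi]
    have L: "(\<integral>w. g w (oX \<omega>) \<partial>(\<nu> P (oX \<omega>))) = indicator B (oX \<omega>) * measure (\<nu> P (oX \<omega>)) C" for \<omega>
    proof -
      have "C \<in> sets (\<nu> P (oX \<omega>))" using nuP(1) C by simp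
      moreover have "emeasure (\<nu> P (oX \<omega>)) C \<noteq> \<top>"
        by (rule finite_measure.emeasure_finite[OF prob_space.finite_measure[OF nuP(2)]])
      ultimately show ?thesis unfolding g_def
        by (simp add: integral_indicator less_top)
    qed
    have S: "{\<omega>\<in>space P. oX \<omega> \<in> B \<and> oW \<omega> \<in> C} \<in> sets P" by measurable
    have R: "(\<integral>\<omega>. g (oW \<omega>) (oX \<omega>) \<partial>P) = measure P {\<omega>\<in>space P. oX \<omega> \<in> B \<and> oW \<omega> \<in> C}"
    proof -
      have "(\<integral>\<omega>. g (oW \<omega>) (oX \<omega>) \<partial>P) = (\<integral>\<omega>. indicator {\<omega>\<in>space P. oX \<omega> \<in> B \<and> oW \<omega> \<in> C} \<omega> \<partial>P)"
        by (rule Bochner_Integration.integral_cong) (auto simp: g_def indicator_def)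
      also have "\<dots> = measure P {\<omega>\<in>space P. oX \<omega> \<in> B \<and> oW \<omega> \<in> C}"
        using S psP by (simp add: integral_indicator prob_space.finite_measure finite_measure.emeasure_finite less_top)
      finally show ?thesis .
    qed
    show "measure P {\<omega>\<in>space P. oX \<omega> \<in> B \<and> oW \<omega> \<in> C}
          = (\<integral>\<omega>. indicator B (oX \<omega>) * measure (\<nu> P (oX \<omega>)) C \<partial>P)"
      using K unfolding L R by simp
  qed
next
  fix Q assume a: "Q_version P Q \<and> integrable P (\<lambda>\<omega>. Delta Q (oW \<omega>) (oX \<omega>))"
  then have Qm[measurable]: "Q \<in> borel_measurable (count_space UNIV \<Otimes>\<^sub>M (borel \<Otimes>\<^sub>M borel))"
    by (simp add: Q_version_def cond_exp_version_def)
  have gm: "(\<lambda>(w,x). Delta Q w x) \<in> borel_measurable (borel \<Otimes>\<^sub>M borel)"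
    unfolding Delta_def by measurable
  show "Psi \<nu> P Q = psi P Q"
    unfolding Psi_def psi_def using key[OF kernel outcome_free ate obs pos gm] a by blast
qed

end
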